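(* Let $F_0$ be a joint input cdf of $(R_0,\Phi_0)$ with amplitude marginal $F_{R_0}$. Write $$p(r,\phi;F_0)=\int p(r,\phi\mid r_0,\phi_0)\,dF_0(r_0,\phi_0),\qquad p(r;F_{R_0})=\int p_{R|R_0}(r\mid r_0)\,dF_{R_0}(r_0).$$ (1) If $F_{R_0}\in\mathcal P$, then for all $r\ge0$: $$p(r,\phi;F_0)\le\frac{2k_ur}{\sigma^2\mathcal L}e^{-\frac{r^2-2r\rho}{\sigma^2\mathcal L}}.$$ (2) If $F_{R_0}\in\mathcal A$, then for all $r>0$ with $\mathcal C(r/2)>0$: $$p(r,\phi;F_0)\le\frac{2k_ur}{\sigma^2\mathcal L}\Big(e^{-\frac{r^2}{4\sigma^2\mathcal L}}+\frac{A}{\mathcal C(r/2)}\Big).$$ (3) If $F_{R_0}\in\mathcal F$, let $k_1=\int_0^\infty e^{-r_0^2/(\sigma^2\mathcal L)}\,dF_{R_0}(r_0)$. Then for all sufficiently large $r$: $$p(r,\phi;F_0)\ge\frac{k_1r}{\pi\sigma^2\mathcal L}e^{-\frac{r^2}{\sigma^2\mathcal L}}(1-\xi(r)).$$ Moreover, for all $r\ge0$: $$p(r;F_{R_0})\ge\frac{2k_1r}{\sigma^2\mathcal L}e^{-\frac{r^2}{\sigma^2\mathcal L}}.$$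
   Context: Fix constants $\gamma>0$, $\sigma>0$, $\mathcal L>0$, and let $j=\sqrt{-1}$. For $m\in\mathbb N$ let $\beta_m=\sqrt{m\gamma/2}\,\sigma\mathcal L$ and $$a_m=\frac{\sqrt{jm\gamma}}{\sigma}\coth\!\big(\sqrt{jm\gamma\sigma^2}\,\mathcal L\big),\qquad b_m=\frac{\sqrt{jm\gamma}}{\sigma}\,\frac{1}{\sinh\!\big(\sqrt{jm\gamma\sigma^2}\,\mathcal L\big)},$$ with principal square roots. $I_m$ denotes the modified Bessel function of the first kind of order $m$. The PZD channel conditional density (input polar coordinates $(r_0,\phi_0)$, output polar coordinates $(r,\phi)$) is $$p(r,\phi\mid r_0,\phi_0)=\frac{1}{2\pi}p_{R|R_0}(r\mid r_0)+\frac1\pi\sum_{m\ge1}\Re\!\Big(C_m(r,r_0)\,e^{jm(\phi-\phi_0-\gamma r_0^2\mathcal L)}\Big),$$ where $$p_{R|R_0}(r\mid r_0)=\frac{2r}{\sigma^2\mathcal L}e^{-\frac{r^2+r_0^2}{\sigma^2\mathcal L}}I_0\!\Big(\frac{2rr_0}{\sigma^2\mathcal L}\Big),\qquad C_m(r,r_0)=r\,b_m\,e^{-a_m(r^2+r_0^2)}I_m(2b_m r_0 r).$$ Define $$k_u=\frac{1}{2\pi}\Big(1+\sqrt2\sum_{m\ge1}\frac{\beta_m}{\sinh\beta_m}\Big),\qquad \xi(r)=\sqrt2\,e^{-\left(\Re(a_1)-\frac{1}{\sigma^2\mathcal L}\right)r^2}\sum_{m\ge1}\frac{\beta_m}{\sinh\beta_m}.$$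 Constraints. Fix $0<\rho<\infty$ and $0<A<\infty$. A function $\mathcal C:[0,\infty)\to[0,\infty)$ is an admissible cost if it satisfies two conditions: - (C1) it is lower semicontinuous and non-decreasing, with $\mathcal C(0)=0$ and $\lim_{r_0\to\infty}\mathcal C(r_0)=\infty$; - (C2) it extends analytically to a strip $\{z\in\mathbb C:|\Im z|<\delta\}$ for some $\delta>0$. The three sets of cdfs $F_{R_0}$ of $R_0$ are: - $\mathcal P=\{F_{R_0}:\int_0^\rho dF_{R_0}=1\}$; - $\mathcal A=\{F_{R_0}:\int_0^\infty\mathcal C\,dF_{R_0}\le A\}$ for an admissible cost with $\mathcal C(r_0)/r_0^2\to\infty$; - $\mathcal A'$, defined like $\mathcal A$ but with admissible $\mathcal C$ satisfying $\mathcal C(r_0)/\ln r_0\to\infty$. $\mathcal F$ denotes any one of $\mathcal P$, $\mathcal A$, $\mathcal P\cap\mathcal A'$. *)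

theory Defs
  imports "HOL-Analysis.Analysis" "HOL-Probability.Probability"
begin

definition besselI :: "nat \<Rightarrow> complex \<Rightarrow> complex" where
  "besselI m z = (\<Sum>k. (z / 2) ^ (2 * k + m) / of_real (fact k * fact (k + m)))"

definition ccoth :: "complex \<Rightarrow> complex" where
  "ccoth z = cosh z / sinh z"

definition beta_m :: "real \<Rightarrow> real \<Rightarrow> real \<Rightarrow> nat \<Rightarrow> real" where
  "beta_m \<gamma> \<sigma> L m = sqrt (real m * \<gamma> / 2) * \<sigma> * L"

definition a_m :: "real \<Rightarrow> real \<Rightarrow> real \<Rightarrow> nat \<Rightarrow> complex" where
  "a_m \<gamma> \<sigma> L m = csqrt (\<i> * of_nat m * of_real \<gamma>) / of_real \<sigma>
     * ccoth (csqrt (\<i> * of_nat m * of_real \<gamma> * of_real (\<sigma>^2)) * of_real L)"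

definition b_m :: "real \<Rightarrow> real \<Rightarrow> real \<Rightarrow> nat \<Rightarrow> complex" where
  "b_m \<gamma> \<sigma> L m = csqrt (\<i> * of_nat m * of_real \<gamma>) / of_real \<sigma>
     * (1 / sinh (csqrt (\<i> * of_nat m * of_real \<gamma> * of_real (\<sigma>^2)) * of_real L))"

definition pRR0 :: "real \<Rightarrow> real \<Rightarrow> real \<Rightarrow> real \<Rightarrow> real" where
  "pRR0 \<sigma> L r r0 = 2 * r / (\<sigma>^2 * L) * exp (- (r^2 + r0^2) / (\<sigma>^2 * L))
     * Re (besselI 0 (of_real (2 * r * r0 / (\<sigma>^2 * L))))"

definition Cm :: "real \<Rightarrow> real \<Rightarrow> real \<Rightarrow> nat \<Rightarrow> real \<Rightarrow> real \<Rightarrow> complex" where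
  "Cm \<gamma> \<sigma> L m r r0 = of_real r * b_m \<gamma> \<sigma> L m * exp (- a_m \<gamma> \<sigma> L m * of_real (r^2 + r0^2))
     * besselI m (2 * b_m \<gamma> \<sigma> L m * of_real (r0 * r))"

definition pcond :: "real \<Rightarrow> real \<Rightarrow> real \<Rightarrow> real \<Rightarrow> real \<Rightarrow> real \<Rightarrow> real \<Rightarrow> real" where
  "pcond \<gamma> \<sigma> L r \<phi> r0 \<phi>0 = 1 / (2 * pi) * pRR0 \<sigma> L r r0
     + 1 / pi * (\<Sum>n. Re (Cm \<gamma> \<sigma> L (Suc n) r r0
          * exp (\<i> * of_nat (Suc n) * of_real (\<phi> - \<phi>0 - \<gamma> * r0^2 * L))))"

definition k_u :: "real \<Rightarrow> real \<Rightarrow> real \<Rightarrow> real" where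
  "k_u \<gamma> \<sigma> L = 1 / (2 * pi) * (1 + sqrt 2 * (\<Sum>n. beta_m \<gamma> \<sigma> L (Suc n) / sinh (beta_m \<gamma> \<sigma> L (Suc n))))"

definition xi :: "real \<Rightarrow> real \<Rightarrow> real \<Rightarrow> real \<Rightarrow> real" where
  "xi \<gamma> \<sigma> L r = sqrt 2 * exp (- (Re (a_m \<gamma> \<sigma> L 1) - 1 / (\<sigma>^2 * L)) * r^2)
     * (\<Sum>n. beta_m \<gamma> \<sigma> L (Suc n) / sinh (beta_m \<gamma> \<sigma> L (Suc n)))"

text \<open>Output densities for a joint input distribution M on (r0, phi0), a probability measure
  on real \<times> real (Lebesgue-Stieltjes integral against the joint cdf F0).\<close>
definition p_out :: "real \<Rightarrow> real \<Rightarrow> real \<Rightarrow> (real \<times> real) measure \<Rightarrow> real \<Rightarrow> real \<Rightarrow> real" where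
  "p_out \<gamma> \<sigma> L M r \<phi> = (\<integral>x. pcond \<gamma> \<sigma> L r \<phi> (fst x) (snd x) \<partial>M)"

text \<open>p(r; F_R0): integral against the amplitude marginal F_R0 = distribution of fst under M.\<close>
definition p_amp :: "real \<Rightarrow> real \<Rightarrow> (real \<times> real) measure \<Rightarrow> real \<Rightarrow> real" where
  "p_amp \<sigma> L M r = (\<integral>r0. pRR0 \<sigma> L r r0 \<partial>(distr M lborel fst))"

definition admissible_cost :: "(real \<Rightarrow> real) \<Rightarrow> bool" where
  "admissible_cost C \<longleftrightarrow>
     (\<forall>x\<ge>0. C x \<ge> 0) \<and>
     (\<forall>x\<ge>0. \<forall>t. t < C x \<longrightarrow> (\<forall>\<^sub>F y in at x within {0..}. t < C y)) \<and>
     mono_on {0..} C \<and> C 0 = 0 \<and> filterlim C at_top at_top \<and>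
     (\<exists>\<delta>>0. \<exists>g. g holomorphic_on {z. \<bar>Im z\<bar> < \<delta>} \<and> (\<forall>x\<ge>0. g (of_real x) = of_real (C x)))"

definition in_P :: "real \<Rightarrow> real measure \<Rightarrow> bool" where
  "in_P \<rho> F \<longleftrightarrow> measure F {0..\<rho>} = 1"

definition in_A :: "(real \<Rightarrow> real) \<Rightarrow> real \<Rightarrow> real measure \<Rightarrow> bool" where
  "in_A C A F \<longleftrightarrow> admissible_cost C \<and> filterlim (\<lambda>r0. C r0 / r0^2) at_top at_top
     \<and> (\<integral>\<^sup>+ r0. ennreal (C r0) \<partial>F) \<le> ennreal A"

definition in_A' :: "(real \<Rightarrow> real) \<Rightarrow> real \<Rightarrow> real measure \<Rightarrow> bool" where
  "in_A' C A F \<longleftrightarrow> admissible_cost C \<and> filterlim (\<lambda>r0. C r0 / ln r0) at_top at_top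
     \<and> (\<integral>\<^sup>+ r0. ennreal (C r0) \<partial>F) \<le> ennreal A"

end

theory Submission
  imports Defs "HOL-Real_Asymp.Real_Asymp"
begin


definition ua :: "nat \<Rightarrow> real" where
  "ua n = (if even n then 1 / fact n else 0) - cos_coeff n"

lemma ua_sums: "(\<lambda>n. ua n * t^n) sums (cosh t - cos t)"
proof -
  have "(\<lambda>n. (if even n then t ^ n /\<^sub>R fact n else 0) - cos_coeff n *\<^sub>R t^n) sums (cosh t - cos t)"
    by (intro sums_diff cosh_converges cos_converges)
  moreover have "(\<lambda>n. (if even n then t ^ n /\<^sub>R fact n else 0) - cos_coeff n *\<^sub>R t^n) = (\<lambda>n. ua n * t^n)"
    by (auto simp: ua_def fun_eq_iff field_simps)
  ultimately show ?thesis by simp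
qed

lemma ua_nonneg: "ua n \<ge> 0"
proof -
  have "(-1::real)^k \<le> 1" for k by (cases "even k") auto
  then show ?thesis by (auto simp: ua_def cos_coeff_def divide_simps)
qed

lemma ua_small: "ua 0 = 0" "ua 1 = 0" "ua 2 = 1" "ua 6 = 1/360"
  by (simp_all add: ua_def cos_coeff_def fact_numeral)

lemma ua_Suc: "real (Suc n) * ua (Suc n) = (if even n then 0 else 1 / fact n) + sin_coeff n"
proof (cases "even n")
  case True then show ?thesis by (simp add: ua_def cos_coeff_def sin_coeff_def)
next
  case False
  then obtain k where k: "n = 2*k+1" by (metis oddE)
  have e1: "Suc n = Suc (Suc (2*k))" "Suc n div 2 = Suc k" "(n - Suc 0) div 2 = k" using k by auto
  have fS: "fact (Suc (Suc (2*k))) = real (Suc (Suc (2*k))) * (fact (Suc (2*k)) :: real)"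
    by (rule fact_Suc)
  have fpos: "(fact (Suc (2*k)) :: real) > 0" by simp
  have "(2 + 2 * real k) * (1 / fact (Suc (Suc (2 * k))) + (- 1) ^ k / fact (Suc (Suc (2 * k))))
        = 1 / fact (Suc (2*k)) + (-1)^k / (fact (Suc (2*k)) :: real)"
  proof -
    define F :: real where "F = fact (Suc (2*k))"
    have Fp: "F > 0" using fpos F_def by simp
    have e: "real (Suc (Suc (2*k))) = 2 + 2 * real k" by simp
    have "(2 + 2 * real k) * (1 / ((2 + 2 * real k) * F) + (- 1) ^ k / ((2 + 2 * real k) * F))
        = 1 / F + (-1)^k / F" using Fp by (simp add: divide_simps)
    then show ?thesis unfolding fS e F_def .
  qed
  then show ?thesis using False k
    by (simp add: ua_def cos_coeff_def sin_coeff_def e1 diff_divide_distrib del: fact_Suc)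
qed

lemma ua_sums2: "(\<lambda>n. real n * ua n * t^n) sums (t * (sinh t + sin t))"
proof -
  have "(\<lambda>n. (if even n then 0 else t ^ n /\<^sub>R fact n) + sin_coeff n *\<^sub>R t^n) sums (sinh t + sin t)"
    by (intro sums_add sinh_converges sin_converges)
  then have "(\<lambda>n. t * ((if even n then 0 else t ^ n /\<^sub>R fact n) + sin_coeff n *\<^sub>R t^n)) sums (t * (sinh t + sin t))"
    by (rule sums_mult)
  moreover have "(\<lambda>n. t * ((if even n then 0 else t ^ n /\<^sub>R fact n) + sin_coeff n *\<^sub>R t^n))
     = (\<lambda>n. real (Suc n) * ua (Suc n) * t^(Suc n))"
  proof
    fix n
    have "real (Suc n) * ua (Suc n) * t^(Suc n) = (real (Suc n) * ua (Suc n)) * (t * t^n)" by simp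
    also have "\<dots> = t * ((if even n then 0 else t ^ n /\<^sub>R fact n) + sin_coeff n *\<^sub>R t^n)"
      by (simp only: ua_Suc) (cases "even n", simp_all add: field_simps)
    finally show "t * ((if even n then 0 else t ^ n /\<^sub>R fact n) + sin_coeff n *\<^sub>R t^n) = real (Suc n) * ua (Suc n) * t^(Suc n)" by (rule sym)
  qed
  ultimately have "(\<lambda>n. real (Suc n) * ua (Suc n) * t^(Suc n)) sums (t * (sinh t + sin t))"
    by simp
  then show ?thesis by (subst (asm) sums_Suc_iff) simp
qed

lemma cheb_fin:
  fixes a :: "nat \<Rightarrow> real"
  assumes a: "\<And>n. a n \<ge> 0" and y: "0 \<le> y" "y \<le> x"
  shows "(\<Sum>n<N. real n * a n * y^n) * (\<Sum>m<N. a m * x^m) \<le> (\<Sum>n<N. real n * a n * x^n) * (\<Sum>m<N. a m * y^m)"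
proof -
  define g where "g n m = a n * a m * real n * (x^n * y^m - y^n * x^m)" for n m
  have sym: "g n m + g m n \<ge> 0" for n m
  proof (cases "m \<le> n")
    case True
    have "y^(n-m) \<le> x^(n-m)" using y by (intro power_mono) auto
    then have "x^m * y^m * y^(n-m) \<le> x^m * y^m * x^(n-m)" using y by (intro mult_left_mono) auto
    then have "y^n * x^m \<le> x^n * y^m" using True
      by (metis (no_types, lifting) le_add_diff_inverse mult.assoc mult.commute power_add)
    moreover have "real m \<le> real n" using True by simp
    ultimately have "0 \<le> a n * a m * ((real n - real m) * (x^n * y^m - y^n * x^m))"
      using a by (intro mult_nonneg_nonneg) auto
    then show ?thesis by (simp add: g_def algebra_simps)
  next
    case False
    have "y^(m-n) \<le> x^(m-n)" using y by (intro power_mono) auto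
    then have "x^n * y^n * y^(m-n) \<le> x^n * y^n * x^(m-n)" using y by (intro mult_left_mono) auto
    then have "y^m * x^n \<le> x^m * y^n" using False
      by (metis (no_types, lifting) le_add_diff_inverse nat_le_linear mult.assoc mult.commute power_add)
    moreover have "real n \<le> real m" using False by simp
    ultimately have "0 \<le> a n * a m * ((real m - real n) * (x^m * y^n - y^m * x^n))"
      using a by (intro mult_nonneg_nonneg) auto
    then show ?thesis by (simp add: g_def algebra_simps)
  qed
  have D: "(\<Sum>n<N. real n * a n * x^n) * (\<Sum>m<N. a m * y^m) - (\<Sum>n<N. real n * a n * y^n) * (\<Sum>m<N. a m * x^m)
      = (\<Sum>n<N. \<Sum>m<N. g n m)"
    by (simp add: g_def sum_distrib_left sum_distrib_right sum_subtractf[symmetric] algebra_simps)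
  have "(\<Sum>n<N. \<Sum>m<N. g n m) = (\<Sum>n<N. \<Sum>m<N. g m n)" by (rule sum.swap)
  then have "2 * (\<Sum>n<N. \<Sum>m<N. g n m) = (\<Sum>n<N. \<Sum>m<N. g n m + g m n)"
    by (simp add: sum.distrib)
  also have "\<dots> \<ge> 0" by (intro sum_nonneg sym)
  finally show ?thesis using D by simp
qed

lemma cheb_lim:
  fixes a :: "nat \<Rightarrow> real"
  assumes a: "\<And>n. a n \<ge> 0" and y: "0 \<le> y" "y \<le> x"
    and s1: "(\<lambda>n. real n * a n * y^n) sums V1" and s2: "(\<lambda>n. a n * x^n) sums U2"
    and s3: "(\<lambda>n. real n * a n * x^n) sums V2" and s4: "(\<lambda>n. a n * y^n) sums U1"
  shows "V1 * U2 \<le> V2 * U1"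
proof (rule LIMSEQ_le)
  show "(\<lambda>N. (\<Sum>n<N. real n * a n * y^n) * (\<Sum>m<N. a m * x^m)) \<longlonglongrightarrow> V1 * U2"
    using s1 s2 unfolding sums_def by (rule tendsto_mult)
  show "(\<lambda>N. (\<Sum>n<N. real n * a n * x^n) * (\<Sum>m<N. a m * y^m)) \<longlonglongrightarrow> V2 * U1"
    using s3 s4 unfolding sums_def by (rule tendsto_mult)
  show "\<exists>N. \<forall>n\<ge>N. (\<Sum>n<n. real n * a n * y^n) * (\<Sum>m<n. a m * x^m) \<le> (\<Sum>n<n. real n * a n * x^n) * (\<Sum>m<n. a m * y^m)"
    using cheb_fin[of a y x] a y by blast
qed

definition UU :: "real \<Rightarrow> real" where "UU t = cosh t - cos t"
definition VV :: "real \<Rightarrow> real" where "VV t = t * (sinh t + sin t)"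

lemma UV_mono: "0 \<le> y \<Longrightarrow> y \<le> x \<Longrightarrow> VV y * UU x \<le> VV x * UU y"
  unfolding UU_def VV_def by (rule cheb_lim[OF ua_nonneg _ _ ua_sums2 ua_sums ua_sums2 ua_sums])

lemma UU_ge: "t \<ge> 0 \<Longrightarrow> UU t \<ge> t^2"
proof -
  assume t: "t \<ge> 0"
  have "sum (\<lambda>n. ua n * t^n) {2} \<le> suminf (\<lambda>n. ua n * t^n)"
    using ua_sums[of t] t by (intro sum_le_suminf) (auto simp: sums_iff intro!: mult_nonneg_nonneg ua_nonneg)
  then show ?thesis using ua_sums[of t] by (simp add: UU_def sums_iff ua_small)
qed

lemma VU_gt: "t > 0 \<Longrightarrow> VV t > 2 * UU t"
proof -
  assume t: "t > 0"
  have s: "(\<lambda>n. real n * ua n * t^n - 2 * (ua n * t^n)) sums (VV t - 2 * UU t)"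
    unfolding UU_def VV_def by (intro sums_diff sums_mult ua_sums2 ua_sums)
  have nn: "real n * ua n * t^n - 2 * (ua n * t^n) \<ge> 0" for n
  proof (cases "n \<ge> 2")
    case True
    have "0 \<le> ua n * t^n" using t ua_nonneg[of n] by simp
    then have "2 * (ua n * t^n) \<le> real n * (ua n * t^n)" using True by (intro mult_right_mono) auto
    then show ?thesis by (simp add: mult.assoc)
  next
    case False then have "n = 0 \<or> n = 1" by auto
    then show ?thesis using ua_small by auto
  qed
  have "sum (\<lambda>n. real n * ua n * t^n - 2 * (ua n * t^n)) {6} \<le> suminf (\<lambda>n. real n * ua n * t^n - 2 * (ua n * t^n))"
    using s nn by (intro sum_le_suminf) (auto simp: sums_iff)
  moreover have "sum (\<lambda>n. real n * ua n * t^n - 2 * (ua n * t^n)) {6} > 0" using t by (simp add: ua_small)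
  ultimately show ?thesis using s by (simp add: sums_iff)
qed


lemma exp_neg_of_real: "exp (- complex_of_real x) = complex_of_real (exp (-x))"
  using Transcendental.exp_of_real[of "-x", where 'a=complex] by (simp only: of_real_minus)

lemma g1: "(4::real) * a / (2 * (2 * b)) = a / b" by (cases "b=0") (simp_all add: field_simps)
lemma g2: "(2*x)^2 / (2 * D) = 2 * x^2 / (D::real)" by (cases "D=0") (simp_all add: field_simps power2_eq_square)

lemma four_two: "(4::real) * a / (2 * b) = 2 * a / b"
  by (cases "b=0") (simp_all add: field_simps)

lemma sinh_of_real': "sinh (of_real x :: complex) = of_real (sinh x)"
  using Transcendental.exp_of_real[of x, where 'a=complex] exp_neg_of_real[of x] by (simp add: sinh_def scaleR_conv_of_real)
lemma cosh_of_real': "cosh (of_real x :: complex) = of_real (cosh x)"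
  using Transcendental.exp_of_real[of x, where 'a=complex] exp_neg_of_real[of x] by (simp add: cosh_def scaleR_conv_of_real)

lemma sinh_ii: "sinh (\<i> * of_real x) = \<i> * of_real (sin x)"
  by (simp add: sinh_conv_sin sin_of_real[symmetric])
lemma cosh_ii: "cosh (\<i> * of_real x) = of_real (cos x)"
  by (simp add: cosh_conv_cos cos_of_real[symmetric])

lemma diag_eq: "Complex x x = of_real x + \<i> * of_real x"
  by (simp add: complex_eq_iff)

lemma sinh_diag: "sinh (Complex x x) = Complex (sinh x * cos x) (cosh x * sin x)"
  unfolding diag_eq sinh_add sinh_of_real' cosh_of_real' sinh_ii cosh_ii
  by (simp add: complex_eq_iff)

lemma cosh_diag: "cosh (Complex x x) = Complex (cosh x * cos x) (sinh x * sin x)"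
  unfolding diag_eq cosh_add sinh_of_real' cosh_of_real' sinh_ii cosh_ii
  by (simp add: complex_eq_iff)

definition Fr :: "real \<Rightarrow> real" where "Fr t = VV t / (2 * UU t)"

lemma UU_double: "UU (2*x) = 2 * ((sinh x)^2 + (sin x)^2)"
  by (simp add: UU_def cosh_double cos_double_sin cosh_square_eq)

lemma VV_double: "VV (2*x) = 4 * x * (sinh x * cosh x + sin x * cos x)"
  unfolding VV_def sinh_double sin_double by (simp add: algebra_simps)

lemma Re_wcoth: 
  assumes "x > 0"
  shows "Re (Complex x x * cosh (Complex x x) / sinh (Complex x x)) = Fr (2*x)"
proof -
  define SH where "SH = sinh x"
  define CH where "CH = cosh x"
  define sn where "sn = sin x"
  define cs where "cs = cos x"
  have CS: "CH^2 = SH^2 + 1" "cs^2 = 1 - sn^2" unfolding SH_def CH_def sn_def cs_def by (simp_all add: cosh_square_eq cos_squared_eq)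
  have pos: "SH^2 + sn^2 > 0" using assms unfolding SH_def CH_def sn_def cs_def by (simp add: add_pos_nonneg)
  have e0: "Re (Complex x x * cosh (Complex x x) / sinh (Complex x x))
     = (x * (CH * cs - SH * sn) * (SH * cs) + x * (SH * sn + CH * cs) * (CH * sn)) / ((SH * cs)^2 + (CH * sn)^2)"
    unfolding sinh_diag cosh_diag Re_divide SH_def CH_def sn_def cs_def by (simp add: algebra_simps)
  have e1: "(SH * cs)^2 + (CH * sn)^2 = SH^2 + sn^2" 
    by (simp add: power_mult_distrib CS algebra_simps)
  have e2: "x * (CH * cs - SH * sn) * (SH * cs) + x * (SH * sn + CH * cs) * (CH * sn) = x * (SH * CH + sn * cs)"
  proof -
    have "x * (CH * cs - SH * sn) * (SH * cs) + x * (SH * sn + CH * cs) * (CH * sn) = x * (SH * CH * (cs^2 + sn^2) + sn * cs * (CH^2 - SH^2))"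
      by (simp add: algebra_simps power2_eq_square)
    also have "cs^2 + sn^2 = 1" using CS by simp
    also have "CH^2 - SH^2 = 1" using CS by simp
    finally show ?thesis by simp
  qed
  have e3: "Fr (2*x) = (4 * (x * (SH * CH + sn * cs))) / (2 * (2 * (SH^2 + sn^2)))"
    unfolding Fr_def UU_double VV_double SH_def CH_def sn_def cs_def by (simp add: mult.assoc)
  have e4: "(4 * (x * (SH * CH + sn * cs))) / (2 * (2 * (SH^2 + sn^2))) = x * (SH * CH + sn * cs) / (SH^2 + sn^2)"
    by (rule g1)
  show ?thesis unfolding e0 e1 e2 e3 e4 ..
qed

lemma norm_wsinh_sq:
  assumes "x > 0"
  shows "(cmod (Complex x x / sinh (Complex x x)))^2 = (2*x)^2 / UU (2*x)"
proof -
  define D where "D = (sinh x)^2 + (sin x)^2"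
  have CS: "(cosh x)^2 = (sinh x)^2 + 1" "(cos x)^2 = 1 - (sin x)^2" by (simp_all add: cosh_square_eq cos_squared_eq)
  have "(cmod (Complex x x / sinh (Complex x x)))^2 = (2*x^2) / ((sinh x * cos x)^2 + (cosh x * sin x)^2)"
    unfolding norm_divide power_divide cmod_power2 sinh_diag by (simp add: power2_eq_square)
  also have "(sinh x * cos x)^2 + (cosh x * sin x)^2 = D"
    unfolding D_def by (simp add: power_mult_distrib CS algebra_simps)
  also have "2*x^2 / D = (2*x)^2 / (2 * D)" by (rule g2[symmetric])
  finally show ?thesis unfolding UU_double D_def .
qed

lemma norm_wsinh_le1:
  assumes "x > 0"
  shows "cmod (Complex x x / sinh (Complex x x)) \<le> 1"
proof -
  have u: "UU (2*x) \<ge> (2*x)^2" using assms by (intro UU_ge) auto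
  moreover have p: "(2*x)^2 > 0" using assms by simp
  ultimately have "UU (2*x) > 0" by linarith
  then have "(2*x)^2 / UU (2*x) \<le> 1" using u by simp
  then have "(cmod (Complex x x / sinh (Complex x x)))^2 \<le> 1^2" using norm_wsinh_sq[OF assms] by simp
  then show ?thesis by (rule power2_le_imp_le) simp
qed

lemma norm_wsinh_le2:
  assumes "x > 0"
  shows "cmod (Complex x x / sinh (Complex x x)) \<le> sqrt 2 * x / sinh x"
proof -
  have "(cmod (Complex x x / sinh (Complex x x)))^2 = (2*x)^2 / UU (2*x)" by (rule norm_wsinh_sq[OF assms])
  also have "\<dots> = 2 * x^2 / ((sinh x)^2 + (sin x)^2)"
    unfolding UU_double by (rule g2)
  also have "\<dots> \<le> 2 * x^2 / (sinh x)^2"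
  proof -
    have "sinh x > 0" using assms by simp
    then have p1: "(sinh x)^2 > 0" by simp
    moreover have "(sin x)^2 \<ge> 0" by simp
    ultimately have p2: "(sinh x)^2 + (sin x)^2 > 0" by (rule add_pos_nonneg)
    show ?thesis by (rule divide_left_mono) (use p1 p2 in auto)
  qed
  also have "\<dots> = (sqrt 2 * x / sinh x)^2" by (simp add: power_divide power_mult_distrib)
  finally show ?thesis by (rule power2_le_imp_le) (use assms in simp)
qed

lemma Fr_gt1: "t > 0 \<Longrightarrow> Fr t > 1"
proof -
  assume t: "t > 0"
  have "UU t \<ge> t^2" using t by (intro UU_ge) auto
  then have "UU t > 0" using t by (smt (verit) zero_less_power)
  then show ?thesis using VU_gt[OF t] by (simp add: Fr_def)
qed

lemma Fr_mono: "0 < y \<Longrightarrow> y \<le> x \<Longrightarrow> Fr y \<le> Fr x"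
proof -
  assume y: "0 < y" "y \<le> x"
  have "UU y > 0" using UU_ge[of y] y by (smt (verit) zero_less_power)
  moreover have "UU x > 0" using UU_ge[of x] y by (smt (verit) zero_less_power)
  ultimately show ?thesis using UV_mono[of y x] y by (simp add: Fr_def divide_simps algebra_simps)
qed


lemma csqrt_diag:
  assumes "c \<ge> 0"
  shows "csqrt (\<i> * of_real c) = Complex (sqrt (c/2)) (sqrt (c/2))"
proof (cases "c = 0")
  case True then show ?thesis by (simp add: complex_eq_iff)
next
  case False
  then have c: "c > 0" using assms by simp
  show ?thesis
  proof (rule csqrt_unique)
    have "(sqrt (c/2))^2 = c/2" using c by simp
    then show "(Complex (sqrt (c/2)) (sqrt (c/2)))^2 = \<i> * of_real c"
      by (simp add: complex_eq_iff power2_eq_square)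
    show "0 < Re (Complex (sqrt (c/2)) (sqrt (c/2))) \<or> Re (Complex (sqrt (c/2)) (sqrt (c/2))) = 0 \<and> 0 \<le> Im (Complex (sqrt (c/2)) (sqrt (c/2)))"
      using c by simp
  qed
qed

locale chan =
  fixes \<gamma> \<sigma> L :: real
  assumes g: "\<gamma> > 0" and sg: "\<sigma> > 0" and LL: "L > 0"
begin

definition ss where "ss = \<sigma>^2 * L"
definition bt where "bt m = beta_m \<gamma> \<sigma> L m"
definition ww where "ww m = Complex (bt m) (bt m)"

lemma ss_pos: "ss > 0" using sg LL by (simp add: ss_def)

lemma bt_pos: "m > 0 \<Longrightarrow> bt m > 0"
  using g sg LL by (simp add: bt_def beta_m_def)

lemma bt_mono: "m \<le> n \<Longrightarrow> bt m \<le> bt n"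
  using g sg LL by (auto simp: bt_def beta_m_def intro!: mult_right_mono divide_right_mono mult_right_mono)

lemma a_eq: "m > 0 \<Longrightarrow> a_m \<gamma> \<sigma> L m = ww m * cosh (ww m) / sinh (ww m) / of_real ss"
proof -
  assume m: "m > 0"
  define q where "q = sqrt (real m * \<gamma> / 2)"
  have c1: "csqrt (\<i> * of_nat m * of_real \<gamma>) = Complex q q"
    using csqrt_diag[of "real m * \<gamma>"] g by (simp add: q_def mult.assoc)
  have "csqrt (\<i> * of_nat m * of_real \<gamma> * of_real (\<sigma>^2)) = Complex (sqrt (real m * \<gamma> * \<sigma>^2 / 2)) (sqrt (real m * \<gamma> * \<sigma>^2 / 2))"
    using csqrt_diag[of "real m * \<gamma> * \<sigma>^2"] g by (simp add: mult.assoc)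
  also have "sqrt (real m * \<gamma> * \<sigma>^2 / 2) = q * \<sigma>"
  proof -
    have "real m * \<gamma> * \<sigma>^2 / 2 = (real m * \<gamma> / 2) * \<sigma>^2" by simp
    then show ?thesis using sg by (simp only: q_def real_sqrt_mult) simp
  qed
  finally have c2': "csqrt (\<i> * of_nat m * of_real \<gamma> * of_real (\<sigma>^2)) = Complex (q * \<sigma>) (q * \<sigma>)" .
  have c2: "csqrt (\<i> * of_nat m * of_real \<gamma> * of_real (\<sigma>^2)) * of_real L = ww m"
    unfolding c2' by (simp add: ww_def bt_def beta_m_def q_def complex_eq_iff)
  have c3: "Complex q q / of_real \<sigma> = ww m / of_real ss"
    using sg LL by (simp add: ww_def bt_def beta_m_def q_def complex_eq_iff ss_def power2_eq_square)
  show ?thesis unfolding a_m_def c1 c2 c3 ccoth_def by (simp add: field_simps)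
qed

lemma b_eq: "m > 0 \<Longrightarrow> b_m \<gamma> \<sigma> L m = ww m / sinh (ww m) / of_real ss"
proof -
  assume m: "m > 0"
  define q where "q = sqrt (real m * \<gamma> / 2)"
  have c1: "csqrt (\<i> * of_nat m * of_real \<gamma>) = Complex q q"
    using csqrt_diag[of "real m * \<gamma>"] g by (simp add: q_def mult.assoc)
  have "csqrt (\<i> * of_nat m * of_real \<gamma> * of_real (\<sigma>^2)) = Complex (sqrt (real m * \<gamma> * \<sigma>^2 / 2)) (sqrt (real m * \<gamma> * \<sigma>^2 / 2))"
    using csqrt_diag[of "real m * \<gamma> * \<sigma>^2"] g by (simp add: mult.assoc)
  also have "sqrt (real m * \<gamma> * \<sigma>^2 / 2) = q * \<sigma>"
  proof -
    have "real m * \<gamma> * \<sigma>^2 / 2 = (real m * \<gamma> / 2) * \<sigma>^2" by simp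
    then show ?thesis using sg by (simp only: q_def real_sqrt_mult) simp
  qed
  finally have c2': "csqrt (\<i> * of_nat m * of_real \<gamma> * of_real (\<sigma>^2)) = Complex (q * \<sigma>) (q * \<sigma>)" .
  have c2: "csqrt (\<i> * of_nat m * of_real \<gamma> * of_real (\<sigma>^2)) * of_real L = ww m"
    unfolding c2' by (simp add: ww_def bt_def beta_m_def q_def complex_eq_iff)
  have c3: "Complex q q / of_real \<sigma> = ww m / of_real ss"
    using sg LL by (simp add: ww_def bt_def beta_m_def q_def complex_eq_iff ss_def power2_eq_square)
  show ?thesis unfolding b_m_def c1 c2 c3 by simp
qed

lemma Re_a: "m > 0 \<Longrightarrow> Re (a_m \<gamma> \<sigma> L m) = Fr (2 * bt m) / ss"
proof -
  assume m: "m > 0"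
  have "Re (a_m \<gamma> \<sigma> L m) = Re (ww m * cosh (ww m) / sinh (ww m)) / ss"
    by (simp only: a_eq[OF m] Re_divide_of_real)
  then show ?thesis using Re_wcoth[OF bt_pos[OF m]] by (simp only: ww_def)
qed

lemma norm_b: "m > 0 \<Longrightarrow> cmod (b_m \<gamma> \<sigma> L m) = cmod (ww m / sinh (ww m)) / ss"
  using b_eq ss_pos by (simp add: norm_divide norm_mult)

lemma Re_a_ge: "m > 0 \<Longrightarrow> Re (a_m \<gamma> \<sigma> L m) \<ge> 1 / ss"
  using Re_a Fr_gt1[of "2 * bt m"] bt_pos[of m] ss_pos by (simp add: divide_right_mono)

lemma Re_a1_gt: "Re (a_m \<gamma> \<sigma> L 1) > 1 / ss"
  using Re_a[of 1] Fr_gt1[of "2 * bt 1"] bt_pos[of 1] ss_pos by (simp add: divide_strict_right_mono)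

lemma Re_a_mono: "m > 0 \<Longrightarrow> Re (a_m \<gamma> \<sigma> L m) \<ge> Re (a_m \<gamma> \<sigma> L 1)"
  using Re_a[of m] Re_a[of 1] Fr_mono[of "2 * bt 1" "2 * bt m"] bt_pos[of 1] bt_mono[of 1 m] ss_pos
  by (simp add: divide_right_mono)

definition cm where "cm m = sqrt 2 * bt m / sinh (bt m)"

lemma norm_b_le1: "m > 0 \<Longrightarrow> cmod (b_m \<gamma> \<sigma> L m) \<le> 1 / ss"
  using norm_b norm_wsinh_le1[OF bt_pos] ss_pos by (simp add: ww_def divide_right_mono)

lemma norm_b_le2: "m > 0 \<Longrightarrow> ss * cmod (b_m \<gamma> \<sigma> L m) \<le> cm m"
  using norm_b norm_wsinh_le2[OF bt_pos] ss_pos by (simp add: ww_def cm_def)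

lemma cm_nonneg: "m > 0 \<Longrightarrow> cm m \<ge> 0"
  using bt_pos[of m] by (simp add: cm_def)

end


definition Jt :: "nat \<Rightarrow> real \<Rightarrow> nat \<Rightarrow> real" where
  "Jt m y k = (y/2)^(2*k+m) / (fact k * fact (k+m))"

definition JJ :: "nat \<Rightarrow> real \<Rightarrow> real" where
  "JJ m y = (\<Sum>k. Jt m y k)"

lemma pw1: "(a::real)^(2*k+m) = a^m * (a^2)^k" by (metis power_add power_mult mult.commute)
lemma pw2: "(a::real)^(2*k) = (a^k)^2" by (metis power_mult mult.commute)

lemma Jt_bound: "\<bar>Jt m y k\<bar> \<le> \<bar>y/2\<bar>^m * (inverse (fact k) * (\<bar>y/2\<bar>^2)^k)"
proof -
  have p: "\<bar>y/2\<bar>^(2*k+m) = \<bar>y/2\<bar>^m * (\<bar>y/2\<bar>^2)^k" by (rule pw1)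
  have "\<bar>Jt m y k\<bar> = \<bar>y/2\<bar>^(2*k+m) / (fact k * fact (k+m))"
    by (simp add: Jt_def abs_mult power_abs)
  also have "\<dots> = \<bar>y/2\<bar>^m * (\<bar>y/2\<bar>^2)^k / (fact k * fact (k+m))" by (simp only: p)
  also have "\<dots> \<le> \<bar>y/2\<bar>^m * (\<bar>y/2\<bar>^2)^k / (fact k * 1)"
    by (intro divide_left_mono mult_left_mono) (auto simp: fact_ge_1)
  finally show ?thesis by (simp add: field_simps)
qed

lemma Jt_summable: "summable (Jt m y)"
proof (rule summable_comparison_test)
  show "\<exists>N. \<forall>n\<ge>N. norm (Jt m y n) \<le> \<bar>y/2\<bar>^m * (inverse (fact n) * (\<bar>y/2\<bar>^2)^n)"
    using Jt_bound by auto
  show "summable (\<lambda>n. \<bar>y/2\<bar>^m * (inverse (fact n) * (\<bar>y/2\<bar>^2)^n))"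
    by (intro summable_mult summable_exp)
qed

lemma besselI_real: "besselI m (of_real y) = of_real (JJ m y)"
proof -
  have "of_real (JJ m y) = (\<Sum>k. complex_of_real (Jt m y k))"
    unfolding JJ_def by (rule suminf_of_real[OF Jt_summable])
  also have "(\<lambda>k. complex_of_real (Jt m y k)) = (\<lambda>k. (of_real y / 2)^(2*k+m) / of_real (fact k * fact (k+m)))"
    by (simp add: Jt_def fun_eq_iff)
  finally show ?thesis by (simp add: besselI_def)
qed

lemma norm_besselI: "cmod (besselI m z) \<le> JJ m (cmod z)"
  unfolding besselI_def JJ_def
proof (rule norm_suminf_le)
  show "summable (Jt m (cmod z))" by (rule Jt_summable)
  fix k
  show "cmod ((z / 2) ^ (2 * k + m) / complex_of_real (fact k * fact (k + m))) \<le> Jt m (cmod z) k"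
    by (simp add: Jt_def norm_divide norm_power norm_mult)
qed

lemma summable_besselI: "summable (\<lambda>k. (z / 2) ^ (2 * k + m) / complex_of_real (fact k * fact (k + m)))"
  by (rule summable_norm_cancel, rule summable_comparison_test[OF _ Jt_summable[of m "cmod z"]])
     (auto simp: Jt_def norm_divide norm_power norm_mult)

lemma Jt_nonneg: "y \<ge> 0 \<Longrightarrow> Jt m y k \<ge> 0" by (simp add: Jt_def)

lemma JJ_nonneg: "y \<ge> 0 \<Longrightarrow> JJ m y \<ge> 0"
  unfolding JJ_def by (intro suminf_nonneg Jt_summable Jt_nonneg)

lemma JJ_mono: "0 \<le> y \<Longrightarrow> y \<le> y' \<Longrightarrow> JJ m y \<le> JJ m y'"
  unfolding JJ_def
  by (intro suminf_le Jt_summable) (auto simp: Jt_def intro!: divide_right_mono power_mono)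

lemma JJ0_ge1: "JJ 0 y \<ge> 1"
proof -
  have "sum (Jt 0 y) {0} \<le> JJ 0 y"
    unfolding JJ_def by (intro sum_le_suminf Jt_summable) (auto simp: Jt_def power_mult)
  then show ?thesis by (simp add: Jt_def)
qed

lemma JJ_le_JJ0: 
  assumes y: "y \<ge> 0"
  shows "JJ m y \<le> JJ 0 y"
proof -
  have amgm: "Jt m y k \<le> (Jt 0 y k + Jt 0 y (k+m)) / 2" for k
  proof -
    define X where "X = (y/2)^k / fact k"
    define Y where "Y = (y/2)^(k+m) / fact (k+m)"
    have "(y/2)^(2*k+m) = (y/2)^k * (y/2)^(k+m)" by (metis power_add mult_2 add.assoc)
    then have "Jt m y k = X * Y" by (simp add: Jt_def X_def Y_def)
    moreover have "Jt 0 y k = X^2"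
    proof -
      have "Jt 0 y k = ((y/2)^k)^2 / (fact k)^2" by (simp add: Jt_def pw2 power2_eq_square)
      then show ?thesis by (simp only: X_def power_divide)
    qed
    moreover have "Jt 0 y (k+m) = Y^2"
    proof -
      have "Jt 0 y (k+m) = ((y/2)^(k+m))^2 / (fact (k+m))^2" by (simp only: Jt_def pw2 power2_eq_square add_0_right)
      then show ?thesis by (simp only: Y_def power_divide)
    qed
    moreover have "2 * (X * Y) \<le> X^2 + Y^2" using zero_le_power2[of "X - Y"] unfolding power2_diff by linarith
    ultimately show ?thesis by simp
  qed
  have s0: "summable (Jt 0 y)" by (rule Jt_summable)
  have s1: "summable (\<lambda>k. Jt 0 y (k+m))" by (rule summable_ignore_initial_segment[OF s0])
  have "JJ m y \<le> (\<Sum>k. (Jt 0 y k + Jt 0 y (k+m)) / 2)"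
    unfolding JJ_def by (intro suminf_le Jt_summable amgm summable_divide summable_add s0 s1)
  also have "\<dots> = (JJ 0 y + (\<Sum>k. Jt 0 y (k+m))) / 2"
    unfolding JJ_def by (simp add: suminf_divide suminf_add[OF s0 s1] summable_add[OF s0 s1])
  also have "(\<Sum>k. Jt 0 y (k+m)) \<le> JJ 0 y"
  proof -
    have "JJ 0 y = (\<Sum>k. Jt 0 y (k+m)) + (\<Sum>i<m. Jt 0 y i)"
      unfolding JJ_def by (rule suminf_split_initial_segment[OF s0])
    moreover have "(\<Sum>i<m. Jt 0 y i) \<ge> 0" by (intro sum_nonneg Jt_nonneg y)
    ultimately show ?thesis by simp
  qed
  finally show ?thesis by simp
qed

lemma fact_double_le: "(fact (2*k) :: real) \<le> 4^k * (fact k)^2"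
proof -
  have "fact k * fact (2*k - k) * real (2*k choose k) = fact (2*k)"
    using binomial_fact_lemma[of k "2*k"] by (metis of_nat_fact of_nat_mult mult_2 le_add1)
  moreover have "real (2*k choose k) \<le> 4^k"
  proof -
    have "real (2*k choose k) \<le> real (2^(2*k))" using binomial_le_pow2[of "2*k" k] by linarith
    then show ?thesis by (simp add: power_mult)
  qed
  ultimately have "fact (2*k) \<le> fact k * fact k * (4::real)^k"
    by (metis diff_mult_distrib2 mult_2 diff_add_inverse2 fact_ge_zero mult_left_mono mult_nonneg_nonneg)
  then show ?thesis by (simp add: power2_eq_square mult_ac)
qed

lemma JJ0_le_exp:
  assumes y: "y \<ge> 0"
  shows "JJ 0 y \<le> exp y"
proof -
  define f where "f n = (if even n then y^n / fact n else 0)" for n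
  have "(\<lambda>n. if even n then y ^ n /\<^sub>R fact n else 0) = f" by (auto simp: f_def fun_eq_iff field_simps)
  then have fs: "f sums cosh y" using cosh_converges[of y] by simp
  have "(\<lambda>k. f (2*k)) sums cosh y"
    by (subst sums_mono_reindex) (auto simp: strict_mono_def f_def fs elim!: oddE)
  then have cs: "(\<lambda>k. y^(2*k) / fact (2*k)) sums cosh y" by (simp add: f_def)
  have le: "Jt 0 y k \<le> y^(2*k) / fact (2*k)" for k
  proof -
    have "Jt 0 y k = y^(2*k) / (4^k * (fact k)^2)"
      using power_mult_distrib[of "2::real" 2 k] by (simp add: Jt_def pw2 power_divide power2_eq_square)
    also have "\<dots> \<le> y^(2*k) / fact (2*k)"
      using fact_double_le[of k] y by (intro divide_left_mono) auto
    finally show ?thesis .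
  qed
  have "JJ 0 y \<le> (\<Sum>k. y^(2*k) / fact (2*k))"
    unfolding JJ_def by (rule suminf_le[OF le Jt_summable]) (use cs in \<open>simp add: sums_iff\<close>)
  also have "\<dots> = cosh y" using cs by (simp add: sums_iff)
  finally have "JJ 0 y \<le> cosh y" .
  also have "cosh y \<le> exp y"
    using y by (simp add: cosh_def)
  finally show ?thesis .
qed


lemma sinh_ge5: "(x::real) \<ge> 0 \<Longrightarrow> sinh x \<ge> x^5 / 120"
proof -
  assume x: "x \<ge> 0"
  define f where "f n = (if even n then 0 else x ^ n / fact n)" for n
  have "(\<lambda>n. if even n then 0 else x ^ n /\<^sub>R fact n) = f" by (auto simp: f_def fun_eq_iff real_scaleR_def divide_inverse mult.commute)
  then have fs: "f sums sinh x" using sinh_converges[of x] by simp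
  have "sum f {5} \<le> suminf f"
    using fs x by (intro sum_le_suminf) (auto simp: sums_iff f_def)
  then show ?thesis using fs by (simp add: sums_iff f_def fact_numeral)
qed

context chan
begin

lemma bt_sq: "(bt m)^2 = real m * (bt 1)^2"
  using g sg LL by (simp add: bt_def beta_m_def power_mult_distrib)

lemma cm_le: "m > 0 \<Longrightarrow> cm m \<le> (sqrt 2 * 120 / (bt 1)^4) * inverse (real m ^ 2)"
proof -
  assume m: "m > 0"
  have b: "bt m > 0" "bt 1 > 0" using bt_pos m by auto
  have "sinh (bt m) \<ge> (bt m)^5 / 120" using b by (intro sinh_ge5) auto
  moreover have "(bt m)^5 / 120 > 0" using b by simp
  ultimately have "cm m \<le> sqrt 2 * bt m / ((bt m)^5 / 120)"
    unfolding cm_def using b by (intro divide_left_mono) auto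
  also have "\<dots> = (sqrt 2 * 120 / (bt 1)^4) * inverse (real m ^ 2)"
  proof -
    have p5: "(bt m)^5 = bt m * (bt m)^4" by (simp add: eval_nat_numeral)
    have p4: "(bt m)^4 = real m ^ 2 * (bt 1)^4"
    proof -
      have "(bt m)^4 = ((bt m)^2)^2" by (simp flip: power_mult)
      also have "\<dots> = (real m)^2 * ((bt 1)^2)^2" by (simp only: bt_sq[of m] power_mult_distrib)
      also have "((bt 1)^2)^2 = (bt 1)^4" by (simp flip: power_mult)
      finally show ?thesis .
    qed
    have nz: "bt m \<noteq> 0" "bt 1 \<noteq> 0" "real m \<noteq> 0" using b m by auto
    show ?thesis unfolding p5 p4 using nz by (simp add: field_simps)
  qed
  finally show ?thesis .
qed

lemma cm_summable: "summable (\<lambda>n. cm (Suc n))"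
proof (rule summable_comparison_test)
  have "summable (\<lambda>n. inverse (real n ^ 2))" by (rule inverse_power_summable) simp
  then have "summable (\<lambda>n. inverse (real (Suc n) ^ 2))" by (subst summable_Suc_iff)
  then show "summable (\<lambda>n. (sqrt 2 * 120 / (bt 1)^4) * inverse (real (Suc n) ^ 2))"
    by (rule summable_mult)
  show "\<exists>N. \<forall>n\<ge>N. norm (cm (Suc n)) \<le> (sqrt 2 * 120 / (bt 1)^4) * inverse (real (Suc n) ^ 2)"
  proof (intro exI allI impI)
    fix n :: nat
    have "norm (cm (Suc n)) = cm (Suc n)" using cm_nonneg[of "Suc n"] by simp
    also have "\<dots> \<le> (sqrt 2 * 120 / (bt 1)^4) * inverse (real (Suc n) ^ 2)" by (rule cm_le) simp
    finally show "norm (cm (Suc n)) \<le> (sqrt 2 * 120 / (bt 1)^4) * inverse (real (Suc n) ^ 2)" .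
  qed
qed

definition Sc where "Sc = (\<Sum>n. cm (Suc n))"

lemma Sc_nonneg: "Sc \<ge> 0"
  unfolding Sc_def by (intro suminf_nonneg cm_summable cm_nonneg) simp

lemma k_u_eq: "k_u \<gamma> \<sigma> L = (1 + Sc) / (2 * pi)"
proof -
  have "sqrt 2 * (\<Sum>n. beta_m \<gamma> \<sigma> L (Suc n) / sinh (beta_m \<gamma> \<sigma> L (Suc n))) = Sc"
  proof -
    have s: "summable (\<lambda>n. beta_m \<gamma> \<sigma> L (Suc n) / sinh (beta_m \<gamma> \<sigma> L (Suc n)))"
      using summable_mult[OF cm_summable, of "1 / sqrt 2"] by (simp add: cm_def bt_def)
    show ?thesis unfolding Sc_def cm_def bt_def using suminf_mult[OF s, of "sqrt 2"] by (simp add: mult.assoc)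
  qed
  then show ?thesis by (simp add: k_u_def)
qed

definition eps where "eps r = exp (- (Re (a_m \<gamma> \<sigma> L 1) - 1 / ss) * r^2)"

lemma xi_eq: "xi \<gamma> \<sigma> L r = eps r * Sc"
proof -
  have "sqrt 2 * (\<Sum>n. beta_m \<gamma> \<sigma> L (Suc n) / sinh (beta_m \<gamma> \<sigma> L (Suc n))) = Sc"
  proof -
    have s: "summable (\<lambda>n. beta_m \<gamma> \<sigma> L (Suc n) / sinh (beta_m \<gamma> \<sigma> L (Suc n)))"
      using summable_mult[OF cm_summable, of "1 / sqrt 2"] by (simp add: cm_def bt_def)
    show ?thesis unfolding Sc_def cm_def bt_def using suminf_mult[OF s, of "sqrt 2"] by (simp add: mult.assoc)
  qed
  then show ?thesis unfolding xi_def eps_def ss_def[symmetric] by (simp add: mult.assoc)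
qed

lemma eps_le1: "eps r \<le> 1"
proof -
  have "(Re (a_m \<gamma> \<sigma> L 1) - 1 / ss) * r^2 \<ge> 0" using Re_a1_gt by (intro mult_nonneg_nonneg) auto
  then show ?thesis unfolding eps_def exp_le_one_iff by linarith
qed

lemma eps_pos: "eps r > 0" by (simp add: eps_def)

lemma pRR0_eq: "pRR0 \<sigma> L r r0 = 2 * r / ss * exp (- (r^2 + r0^2) / ss) * JJ 0 (2 * r * r0 / ss)"
  by (simp only: pRR0_def besselI_real Re_complex_of_real ss_def)

lemma norm_Cm:
  assumes r: "r \<ge> 0" and r0: "r0 \<ge> 0" and m: "m > 0"
  shows "cmod (Cm \<gamma> \<sigma> L m r r0) \<le> cm m / 2 * eps r * pRR0 \<sigma> L r r0"
proof -
  define a where "a = a_m \<gamma> \<sigma> L m"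
  define b where "b = b_m \<gamma> \<sigma> L m"
  define y where "y = 2 * r * r0 / ss"
  have y0: "y \<ge> 0" using r r0 ss_pos by (simp add: y_def)
  have E0: "cmod (Cm \<gamma> \<sigma> L m r r0) = r * cmod b * exp (- Re a * (r^2 + r0^2)) * cmod (besselI m (2 * b * of_real (r0 * r)))"
    using r by (simp add: Cm_def a_def b_def norm_mult)
  have E1: "cmod (besselI m (2 * b * of_real (r0 * r))) \<le> JJ 0 y"
  proof -
    have "cmod (besselI m (2 * b * of_real (r0 * r))) \<le> JJ m (cmod (2 * b * of_real (r0 * r)))" by (rule norm_besselI)
    also have "cmod (2 * b * of_real (r0 * r)) = 2 * cmod b * r0 * r" using r r0 by (simp add: norm_mult)
    also have "JJ m (2 * cmod b * r0 * r) \<le> JJ m y"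
    proof (rule JJ_mono)
      show "0 \<le> 2 * cmod b * r0 * r" using r r0 by simp
      have "cmod b * (r0 * r) \<le> 1 / ss * (r0 * r)" using norm_b_le1[OF m] r r0 unfolding b_def by (intro mult_right_mono) auto
      moreover have "2 * cmod b * r0 * r = 2 * (cmod b * (r0 * r))" by (simp add: mult_ac)
      moreover have "y = 2 * (1 / ss * (r0 * r))" by (simp add: y_def mult_ac)
      ultimately show "2 * cmod b * r0 * r \<le> y" by linarith
    qed
    also have "\<dots> \<le> JJ 0 y" by (rule JJ_le_JJ0[OF y0])
    finally show ?thesis .
  qed
  have E2: "exp (- Re a * (r^2 + r0^2)) \<le> eps r * exp (- (r^2 + r0^2) / ss)"
  proof -
    have "Re a * r^2 \<ge> Re (a_m \<gamma> \<sigma> L 1) * r^2" using Re_a_mono[OF m] unfolding a_def by (intro mult_right_mono) auto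
    moreover have "Re a * r0^2 \<ge> 1 / ss * r0^2" using Re_a_ge[OF m] unfolding a_def by (intro mult_right_mono) auto
    moreover have "- (Re (a_m \<gamma> \<sigma> L 1) - 1 / ss) * r^2 + (- (r^2 + r0^2) / ss) = - (Re (a_m \<gamma> \<sigma> L 1) * r^2) - 1 / ss * r0^2"
      by (simp add: algebra_simps add_divide_distrib diff_divide_distrib)
    moreover have "- Re a * (r^2 + r0^2) = - (Re a * r^2) - Re a * r0^2" by (simp add: algebra_simps)
    ultimately have "- Re a * (r^2 + r0^2) \<le> - (Re (a_m \<gamma> \<sigma> L 1) - 1 / ss) * r^2 + (- (r^2 + r0^2) / ss)"
      by linarith
    then show ?thesis unfolding eps_def by (simp add: exp_add[symmetric])
  qed
  have E3: "r * cmod b \<le> r * (cm m / ss)"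
  proof -
    have "cmod b \<le> cm m / ss" using norm_b_le2[OF m] ss_pos by (simp add: pos_le_divide_eq mult.commute b_def)
    then show ?thesis using r by (rule mult_left_mono)
  qed
  have "cmod (Cm \<gamma> \<sigma> L m r r0) \<le> r * (cm m / ss) * (eps r * exp (- (r^2 + r0^2) / ss)) * JJ 0 y"
    unfolding E0
  proof (rule mult_mono[OF mult_mono[OF E3 E2] E1])
    show "0 \<le> r * (cm m / ss)" using r cm_nonneg[OF m] ss_pos by simp
    show "0 \<le> exp (- Re a * (r\<^sup>2 + r0\<^sup>2))" by simp
    show "0 \<le> r * (cm m / ss) * (eps r * exp (- (r\<^sup>2 + r0\<^sup>2) / ss))" using r cm_nonneg[OF m] ss_pos eps_pos[of r]
      by (intro mult_nonneg_nonneg) auto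
    show "0 \<le> cmod (besselI m (2 * b * complex_of_real (r0 * r)))" by simp
  qed

  also have "\<dots> = cm m / 2 * eps r * pRR0 \<sigma> L r r0" unfolding pRR0_eq y_def by simp
  finally show ?thesis .
qed

end


context chan
begin

lemma pRR0_nonneg: "r \<ge> 0 \<Longrightarrow> r0 \<ge> 0 \<Longrightarrow> pRR0 \<sigma> L r r0 \<ge> 0"
  unfolding pRR0_eq using ss_pos JJ_nonneg[of "2 * r * r0 / ss" 0] by simp

lemma pRR0_upper:
  assumes "r \<ge> 0" "r0 \<ge> 0"
  shows "pRR0 \<sigma> L r r0 \<le> 2 * r / ss * exp (- ((r - r0)^2) / ss)"
proof -
  have "JJ 0 (2 * r * r0 / ss) \<le> exp (2 * r * r0 / ss)" using assms ss_pos by (intro JJ0_le_exp) simp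
  then have "pRR0 \<sigma> L r r0 \<le> 2 * r / ss * exp (- (r^2 + r0^2) / ss) * exp (2 * r * r0 / ss)"
    unfolding pRR0_eq using assms ss_pos by (intro mult_left_mono) auto
  also have "2 * r / ss * exp (- (r^2 + r0^2) / ss) * exp (2 * r * r0 / ss) = 2 * r / ss * exp (- (r^2 + r0^2) / ss + 2 * r * r0 / ss)"
    by (simp add: exp_add mult.assoc)
  also have "- (r^2 + r0^2) / ss + 2 * r * r0 / ss = - ((r - r0)^2) / ss"
    using ss_pos by (simp add: power2_diff field_simps)
  finally show ?thesis .
qed

lemma pRR0_lower:
  assumes "r \<ge> 0"
  shows "pRR0 \<sigma> L r r0 \<ge> 2 * r / ss * exp (- (r^2) / ss) * exp (- (r0^2) / ss)"
proof -
  have "2 * r / ss * exp (- (r^2 + r0^2) / ss) * 1 \<le> pRR0 \<sigma> L r r0"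
    unfolding pRR0_eq using assms ss_pos JJ0_ge1 by (intro mult_left_mono) auto
  moreover have "exp (- (r^2 + r0^2) / ss) = exp (- (r^2) / ss) * exp (- (r0^2) / ss)"
    using ss_pos by (simp add: exp_add[symmetric] field_simps)
  ultimately show ?thesis by (simp add: mult.assoc)
qed

definition trm where "trm r \<phi> r0 \<phi>0 n = Re (Cm \<gamma> \<sigma> L (Suc n) r r0
          * exp (\<i> * of_nat (Suc n) * of_real (\<phi> - \<phi>0 - \<gamma> * r0^2 * L)))"

lemma trm_bound:
  assumes "r \<ge> 0" "r0 \<ge> 0"
  shows "\<bar>trm r \<phi> r0 \<phi>0 n\<bar> \<le> cm (Suc n) / 2 * eps r * pRR0 \<sigma> L r r0"
proof -
  have "\<bar>trm r \<phi> r0 \<phi>0 n\<bar> \<le> cmod (Cm \<gamma> \<sigma> L (Suc n) r r0 * exp (\<i> * of_nat (Suc n) * of_real (\<phi> - \<phi>0 - \<gamma> * r0^2 * L)))"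
    unfolding trm_def by (rule abs_Re_le_cmod)
  also have "\<dots> = cmod (Cm \<gamma> \<sigma> L (Suc n) r r0)" by (simp add: norm_mult)
  also have "\<dots> \<le> cm (Suc n) / 2 * eps r * pRR0 \<sigma> L r r0" by (rule norm_Cm[OF assms]) simp
  finally show ?thesis .
qed

lemma pcond_eq: "pcond \<gamma> \<sigma> L r \<phi> r0 \<phi>0 = pRR0 \<sigma> L r r0 / (2 * pi) + (\<Sum>n. trm r \<phi> r0 \<phi>0 n) / pi"
  unfolding pcond_def trm_def by simp

lemma pcond_dev:
  assumes "r \<ge> 0" "r0 \<ge> 0"
  shows "\<bar>pcond \<gamma> \<sigma> L r \<phi> r0 \<phi>0 - pRR0 \<sigma> L r r0 / (2 * pi)\<bar> \<le> eps r * Sc * pRR0 \<sigma> L r r0 / (2 * pi)"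
proof -
  define Q where "Q = pRR0 \<sigma> L r r0"
  have Q0: "Q \<ge> 0" unfolding Q_def using pRR0_nonneg assms by simp
  have sg: "summable (\<lambda>n. cm (Suc n) / 2 * eps r * Q)"
    using summable_mult2[OF summable_divide[OF cm_summable, of 2], of "eps r * Q"] by (simp add: mult.assoc)
  have "\<bar>\<Sum>n. trm r \<phi> r0 \<phi>0 n\<bar> \<le> (\<Sum>n. cm (Suc n) / 2 * eps r * Q)"
    using norm_suminf_le[of "trm r \<phi> r0 \<phi>0" "\<lambda>n. cm (Suc n) / 2 * eps r * Q"] trm_bound[OF assms] sg
    unfolding Q_def by simp
  also have "(\<Sum>n. cm (Suc n) / 2 * eps r * Q) = Sc * eps r * Q / 2"
    unfolding Sc_def using suminf_mult2[OF cm_summable, of "eps r * Q / 2"] by (simp add: mult_ac)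
  finally have "\<bar>\<Sum>n. trm r \<phi> r0 \<phi>0 n\<bar> \<le> Sc * eps r * Q / 2" .
  then show ?thesis unfolding pcond_eq Q_def[symmetric] by (simp add: divide_simps mult_ac abs_divide)
qed

lemma pcond_upper:
  assumes "r \<ge> 0" "r0 \<ge> 0"
  shows "pcond \<gamma> \<sigma> L r \<phi> r0 \<phi>0 \<le> k_u \<gamma> \<sigma> L * pRR0 \<sigma> L r r0"
proof -
  have "eps r * Sc * pRR0 \<sigma> L r r0 \<le> 1 * Sc * pRR0 \<sigma> L r r0"
    using eps_le1 Sc_nonneg pRR0_nonneg[OF assms] by (intro mult_right_mono) auto
  then show ?thesis using pcond_dev[OF assms, of \<phi> \<phi>0] unfolding k_u_eq by (simp add: field_simps)
qed

lemma pcond_abs: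
  assumes "r \<ge> 0" "r0 \<ge> 0"
  shows "\<bar>pcond \<gamma> \<sigma> L r \<phi> r0 \<phi>0\<bar> \<le> k_u \<gamma> \<sigma> L * pRR0 \<sigma> L r r0"
proof -
  have "eps r * Sc * pRR0 \<sigma> L r r0 \<le> 1 * Sc * pRR0 \<sigma> L r r0"
    using eps_le1 Sc_nonneg pRR0_nonneg[OF assms] by (intro mult_right_mono) auto
  then show ?thesis using pcond_dev[OF assms, of \<phi> \<phi>0] pRR0_nonneg[OF assms] unfolding k_u_eq by (simp add: field_simps)
qed

lemma pcond_lower:
  assumes "r \<ge> 0" "r0 \<ge> 0"
  shows "pcond \<gamma> \<sigma> L r \<phi> r0 \<phi>0 \<ge> pRR0 \<sigma> L r r0 / (2 * pi) * (1 - xi \<gamma> \<sigma> L r)"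
  using pcond_dev[OF assms, of \<phi> \<phi>0] unfolding xi_eq by (simp add: field_simps)

end


lemma besselI_meas[measurable]: "besselI m \<in> borel_measurable borel"
proof -
  have "(\<lambda>z. \<Sum>k. (z / 2) ^ (2 * k + m) / complex_of_real (fact k * fact (k + m))) \<in> borel_measurable borel"
    by measurable
  then show ?thesis by (simp add: besselI_def[abs_def])
qed

lemma besselI_meas'[measurable (raw)]: "f \<in> borel_measurable M \<Longrightarrow> (\<lambda>x. besselI m (f x)) \<in> borel_measurable M"
  using measurable_compose[OF _ besselI_meas] by blast

lemma pRR0_meas[measurable]: "pRR0 \<sigma> L r \<in> borel_measurable borel"
  unfolding pRR0_def[abs_def] by measurable

lemma pcond_meas0: "(\<lambda>x::real\<times>real. pcond \<gamma> \<sigma> L r \<phi> (fst x) (snd x)) \<in> borel_measurable (borel \<Otimes>\<^sub>M borel)"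
  unfolding pcond_def Cm_def by measurable

lemma pcond_meas: "(\<lambda>x::real\<times>real. pcond \<gamma> \<sigma> L r \<phi> (fst x) (snd x)) \<in> borel_measurable borel"
  using pcond_meas0 by (simp add: borel_prod)

lemma int_le_const:
  fixes f :: "'a \<Rightarrow> real"
  assumes "prob_space M" "AE x in M. f x \<le> c" "c \<ge> 0"
  shows "integral\<^sup>L M f \<le> c"
proof (cases "integrable M f")
  case True
  have "integral\<^sup>L M f \<le> integral\<^sup>L M (\<lambda>x. c)"
    by (rule integral_mono_AE[OF True _ assms(2)]) (use assms(1) in \<open>simp add: prob_space.finite_measure finite_measure.integrable_const\<close>)
  also have "\<dots> = c" using assms(1) by (simp add: prob_space.prob_space)
  finally show ?thesis .
next
  case False then show ?thesis using assms by (simp add: not_integrable_integral_eq)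
qed


context chan
begin

lemma k_u_nonneg: "k_u \<gamma> \<sigma> L \<ge> 0"
  unfolding k_u_eq using Sc_nonneg by simp

lemma fst_meas:
  assumes "sets M = sets (borel :: (real \<times> real) measure)"
  shows "fst \<in> measurable M lborel"
proof -
  have "measurable M lborel = measurable (borel \<Otimes>\<^sub>M borel :: (real \<times> real) measure) (borel :: real measure)"
  proof (rule measurable_cong_sets)
    show "sets M = sets (borel \<Otimes>\<^sub>M borel :: (real \<times> real) measure)" using assms by (metis borel_prod)
  qed simp
  then show ?thesis by simp
qed

lemma part1:
  assumes P: "prob_space M" and S: "sets M = sets (borel :: (real \<times> real) measure)"
    and rho: "\<rho> > 0" and inP: "in_P \<rho> (distr M lborel fst)" and r: "r \<ge> 0"
  shows "p_out \<gamma> \<sigma> L M r \<phi> \<le> 2 * k_u \<gamma> \<sigma> L * r / (\<sigma>^2 * L) * exp (- (r^2 - 2 * r * \<rho>) / (\<sigma>^2 * L))"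
proof -
  have fm: "fst \<in> measurable M lborel" by (rule fst_meas[OF S])
  interpret PF: prob_space "distr M lborel fst" using prob_space.prob_space_distr[OF P fm] .
  have "AE r0 in distr M lborel fst. r0 \<in> {0..\<rho>}"
    using inP by (intro PF.AE_prob_1) (simp add: in_P_def)
  then have AE: "AE x in M. fst x \<in> {0..\<rho>}"
    by (subst (asm) AE_distr_iff[OF fm]) auto
  show ?thesis unfolding p_out_def
  proof (rule int_le_const[OF P])
    show "0 \<le> 2 * k_u \<gamma> \<sigma> L * r / (\<sigma>^2 * L) * exp (- (r^2 - 2 * r * \<rho>) / (\<sigma>^2 * L))"
      using k_u_nonneg r sg LL by simp
    show "AE x in M. pcond \<gamma> \<sigma> L r \<phi> (fst x) (snd x) \<le> 2 * k_u \<gamma> \<sigma> L * r / (\<sigma>^2 * L) * exp (- (r^2 - 2 * r * \<rho>) / (\<sigma>^2 * L))"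
      using AE
    proof eventually_elim
      case (elim x)
      define r0 where "r0 = fst x"
      have r0: "0 \<le> r0" "r0 \<le> \<rho>" using elim by (auto simp: r0_def)
      have "pcond \<gamma> \<sigma> L r \<phi> r0 (snd x) \<le> k_u \<gamma> \<sigma> L * pRR0 \<sigma> L r r0" by (rule pcond_upper[OF r r0(1)])
      also have "\<dots> \<le> k_u \<gamma> \<sigma> L * (2 * r / ss * exp (- ((r - r0)^2) / ss))"
        by (rule mult_left_mono[OF pRR0_upper[OF r r0(1)] k_u_nonneg])
      also have "exp (- ((r - r0)^2) / ss) \<le> exp (- (r^2 - 2 * r * \<rho>) / ss)"
      proof -
        have "r * r0 \<le> r * \<rho>" using r r0 by (intro mult_left_mono) auto
        moreover have "(r - r0)^2 = r^2 - 2 * (r * r0) + r0^2" by (simp add: power2_diff)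
        moreover have "r0^2 \<ge> 0" by simp
        ultimately have "- ((r - r0)^2) \<le> - (r^2 - 2 * r * \<rho>)" by linarith
        then have "- ((r - r0)^2) / ss \<le> - (r^2 - 2 * r * \<rho>) / ss" using ss_pos by (intro divide_right_mono) auto
        then show ?thesis by simp
      qed
      then have "k_u \<gamma> \<sigma> L * (2 * r / ss * exp (- ((r - r0)^2) / ss)) \<le> k_u \<gamma> \<sigma> L * (2 * r / ss * exp (- (r^2 - 2 * r * \<rho>) / ss))"
        using k_u_nonneg r ss_pos by (intro mult_left_mono) auto
      finally show ?case unfolding r0_def ss_def by (simp add: mult_ac)
    qed
  qed
qed

lemma part2:
  assumes P: "prob_space M" and S: "sets M = sets (borel :: (real \<times> real) measure)"
    and AE0: "AE x in M. fst x \<ge> 0"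
    and A: "A > 0" and inA: "in_A C A (distr M lborel fst)" and r: "r > 0" and Cr: "C (r/2) > 0"
  shows "p_out \<gamma> \<sigma> L M r \<phi> \<le> 2 * k_u \<gamma> \<sigma> L * r / (\<sigma>^2 * L)
               * (exp (- (r^2) / (4 * \<sigma>^2 * L)) + A / C (r / 2))"
proof -
  have fm: "fst \<in> measurable M lborel" by (rule fst_meas[OF S])
  interpret PM: prob_space M by (rule P)
  interpret PF: prob_space "distr M lborel fst" using prob_space.prob_space_distr[OF P fm] .
  define K where "K = 2 * k_u \<gamma> \<sigma> L * r / ss"
  have K0: "K \<ge> 0" unfolding K_def using k_u_nonneg r ss_pos by simp
  define e where "e = exp (- (r^2) / (4 * ss))"
  define B where "B = {x \<in> space M. r / 2 < fst x}"
  have Bm: "B \<in> sets M" unfolding B_def using fm by measurable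
  have adm: "admissible_cost C" and intC: "(\<integral>\<^sup>+ r0. ennreal (C r0) \<partial>distr M lborel fst) \<le> ennreal A"
    using inA by (auto simp: in_A_def)
  have monoC: "mono_on {0..} C" using adm by (simp add: admissible_cost_def)
  \<comment> \<open>Markov\<close>
  have mB: "measure M B \<le> A / C (r/2)"
  proof -
    have "measure M B = measure (distr M lborel fst) {r/2<..}"
      using fm by (simp add: measure_distr B_def vimage_def Int_def conj_commute)
    moreover have "ennreal (C (r/2)) * emeasure (distr M lborel fst) {r/2<..} \<le> ennreal A"
    proof -
      have "ennreal (C (r/2)) * emeasure (distr M lborel fst) {r/2<..}
          = (\<integral>\<^sup>+ r0. ennreal (C (r/2)) * indicator {r/2<..} r0 \<partial>distr M lborel fst)"
        by (rule nn_integral_cmult_indicator[symmetric]) simp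
      also have "\<dots> \<le> (\<integral>\<^sup>+ r0. ennreal (C r0) \<partial>distr M lborel fst)"
      proof (rule nn_integral_mono)
        fix r0
        show "ennreal (C (r/2)) * indicator {r/2<..} r0 \<le> ennreal (C r0)"
        proof (cases "r/2 < r0")
          case True
          then have "C (r/2) \<le> C r0" using monoC r by (intro mono_onD[OF monoC]) auto
          then show ?thesis using True by (simp add: ennreal_leI)
        qed simp
      qed
      also have "\<dots> \<le> ennreal A" by (rule intC)
      finally show ?thesis .
    qed
    ultimately have "ennreal (C (r/2) * measure M B) \<le> ennreal A"
      using Cr by (simp add: PF.emeasure_eq_measure ennreal_mult)
    then have "C (r/2) * measure M B \<le> A" using A by (simp add: ennreal_le_iff)
    then show ?thesis using Cr by (simp add: pos_le_divide_eq mult.commute)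
  qed
  have bound: "AE x in M. pcond \<gamma> \<sigma> L r \<phi> (fst x) (snd x) \<le> K * e + K * indicator B x"
    using AE0 AE_space
  proof eventually_elim
    case (elim x)
    define r0 where "r0 = fst x"
    have r0: "0 \<le> r0" using elim by (auto simp: r0_def)
    have "pcond \<gamma> \<sigma> L r \<phi> r0 (snd x) \<le> k_u \<gamma> \<sigma> L * pRR0 \<sigma> L r r0" by (rule pcond_upper) (use r r0 in auto)
    also have "\<dots> \<le> k_u \<gamma> \<sigma> L * (2 * r / ss * exp (- ((r - r0)^2) / ss))"
      by (rule mult_left_mono[OF pRR0_upper k_u_nonneg]) (use r r0 in auto)
    also have "\<dots> = K * exp (- ((r - r0)^2) / ss)" by (simp add: K_def)
    also have "\<dots> \<le> K * e + K * indicator B x"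
    proof (cases "r / 2 < r0")
      case True
      then have "x \<in> B" using elim by (simp add: B_def r0_def)
      moreover have ex1: "exp (- ((r - r0)^2) / ss) \<le> 1" using ss_pos by simp
      moreover have "e \<ge> 0" by (simp add: e_def)
      ultimately have "K * exp (- ((r - r0)^2) / ss) \<le> K * e + K * 1"
        using K0 mult_left_mono[OF ex1 K0] mult_nonneg_nonneg[OF K0 \<open>e \<ge> 0\<close>] by linarith
      then show ?thesis using \<open>x \<in> B\<close> by simp
    next
      case False
      have "r^2 / 4 \<le> (r - r0)^2"
      proof -
        have "r / 2 \<le> r - r0" using False by simp
        then have "(r/2)^2 \<le> (r - r0)^2" using r by (intro power_mono) auto
        then show ?thesis by (simp add: power_divide)
      qed
      then have "(r^2 / 4) / ss \<le> (r - r0)^2 / ss" using ss_pos by (intro divide_right_mono) auto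
      moreover have "(r^2 / 4) / ss = r^2 / (4 * ss)" by simp
      ultimately have "- ((r - r0)^2) / ss \<le> - (r^2) / (4 * ss)" by simp
      then have "exp (- ((r - r0)^2) / ss) \<le> e" unfolding e_def by simp
      then have "K * exp (- ((r - r0)^2) / ss) \<le> K * e" using K0 by (rule mult_left_mono)
      moreover have "K * indicator B x \<ge> 0" using K0 by simp
      ultimately show ?thesis by linarith
    qed
    finally show ?case unfolding r0_def .
  qed
  have "p_out \<gamma> \<sigma> L M r \<phi> \<le> K * e + K * measure M B"
  proof (cases "integrable M (\<lambda>x. pcond \<gamma> \<sigma> L r \<phi> (fst x) (snd x))")
    case True
    have iB: "integrable M (indicator B :: _ \<Rightarrow> real)"
      using Bm by (intro integrable_real_indicator) (auto simp: PM.emeasure_eq_measure)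
    have ig: "integrable M (\<lambda>x. K * e + K * indicator B x)"
      by (intro Bochner_Integration.integrable_add PM.integrable_const integrable_mult_right iB)
    have "p_out \<gamma> \<sigma> L M r \<phi> \<le> (\<integral>x. K * e + K * indicator B x \<partial>M)"
      unfolding p_out_def by (rule integral_mono_AE[OF True ig bound])
    also have "\<dots> = (\<integral>x. K * e \<partial>M) + (\<integral>x. K * indicator B x \<partial>M)"
      by (rule Bochner_Integration.integral_add) (intro PM.integrable_const, intro integrable_mult_right iB)
    also have "\<dots> = K * e + K * measure M B"
      using Bm by (simp add: PM.prob_space Int_absorb1 sets.sets_into_space)
    finally show ?thesis .
  next
    case False
    then show ?thesis unfolding p_out_def using K0 by (simp add: not_integrable_integral_eq e_def)
  qed
  also have "\<dots> \<le> K * e + K * (A / C (r/2))" using mB K0 by (intro add_left_mono mult_left_mono) auto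
  also have "K * e + K * (A / C (r/2)) = 2 * k_u \<gamma> \<sigma> L * r / (\<sigma>^2 * L) * (exp (- (r^2) / (4 * \<sigma>^2 * L)) + A / C (r / 2))"
    unfolding K_def e_def ss_def by (simp add: distrib_left mult.assoc)
  finally show ?thesis .
qed

end


lemma exp_neg_sq_tendsto: "(\<delta>::real) > 0 \<Longrightarrow> ((\<lambda>r. exp (- \<delta> * r^2)) \<longlongrightarrow> 0) at_top"
  by real_asymp

context chan
begin

lemma xi_eventually: "\<forall>\<^sub>F r in at_top. xi \<gamma> \<sigma> L r \<le> 1 \<and> r \<ge> 0"
proof -
  have "((\<lambda>r. eps r) \<longlongrightarrow> 0) at_top"
    unfolding eps_def using exp_neg_sq_tendsto[of "Re (a_m \<gamma> \<sigma> L 1) - 1 / ss"] Re_a1_gt by simp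
  then have "((\<lambda>r. eps r * Sc) \<longlongrightarrow> 0) at_top" by (rule tendsto_mult_left_zero)
  then have "\<forall>\<^sub>F r in at_top. eps r * Sc < 1" by (rule order_tendstoD) simp
  moreover have "\<forall>\<^sub>F r in at_top. (r::real) \<ge> 0" by (rule eventually_ge_at_top)
  ultimately show ?thesis by eventually_elim (simp add: xi_eq)
qed

lemma part3a:
  assumes P: "prob_space M" and S: "sets M = sets (borel :: (real \<times> real) measure)"
    and AE0: "AE x in M. fst x \<ge> 0"
    and r: "r \<ge> 0" and xr: "xi \<gamma> \<sigma> L r \<le> 1"
  shows "p_out \<gamma> \<sigma> L M r \<phi> \<ge> (\<integral>r0. exp (- (r0^2) / (\<sigma>^2 * L)) \<partial>(distr M lborel fst))
           * r / (pi * \<sigma>^2 * L) * exp (- (r^2) / (\<sigma>^2 * L)) * (1 - xi \<gamma> \<sigma> L r)"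
proof -
  have fm: "fst \<in> measurable M lborel" by (rule fst_meas[OF S])
  interpret PM: prob_space M by (rule P)
  have k1: "(\<integral>r0. exp (- (r0^2) / (\<sigma>^2 * L)) \<partial>(distr M lborel fst)) = (\<integral>x. exp (- ((fst x)^2) / ss) \<partial>M)"
    by (subst integral_distr[OF fm]) (auto simp: ss_def)
  define c where "c = 2 * r / ss * exp (- (r^2) / ss) / (2 * pi) * (1 - xi \<gamma> \<sigma> L r)"
  have c0: "c \<ge> 0" unfolding c_def using xr r ss_pos by simp
  have pm: "(\<lambda>x. pcond \<gamma> \<sigma> L r \<phi> (fst x) (snd x)) \<in> borel_measurable M"
  proof -
    have eq: "borel_measurable M = borel_measurable (borel :: (real \<times> real) measure)"
      by (rule measurable_cong_sets) (simp_all add: S)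
    show ?thesis by (subst eq) (rule pcond_meas)
  qed
  have em0: "(\<lambda>r0::real. exp (- (r0^2) / ss)) \<in> borel_measurable lborel" by measurable
  have em: "(\<lambda>x. exp (- ((fst x)^2) / ss)) \<in> borel_measurable M"
    using measurable_compose[OF fm em0] by (simp add: o_def)
  have int1: "integrable M (\<lambda>x. pcond \<gamma> \<sigma> L r \<phi> (fst x) (snd x))"
  proof (rule PM.integrable_const_bound[OF _ pm])
    show "AE x in M. norm (pcond \<gamma> \<sigma> L r \<phi> (fst x) (snd x)) \<le> k_u \<gamma> \<sigma> L * (2 * r / ss)"
      using AE0
    proof eventually_elim
      case (elim x)
      have "\<bar>pcond \<gamma> \<sigma> L r \<phi> (fst x) (snd x)\<bar> \<le> k_u \<gamma> \<sigma> L * pRR0 \<sigma> L r (fst x)"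
        by (rule pcond_abs[OF r elim])
      also have "\<dots> \<le> k_u \<gamma> \<sigma> L * (2 * r / ss * exp (- ((r - fst x)^2) / ss))"
        by (rule mult_left_mono[OF pRR0_upper[OF r elim] k_u_nonneg])
      also have "\<dots> \<le> k_u \<gamma> \<sigma> L * (2 * r / ss * 1)"
        using r ss_pos k_u_nonneg by (intro mult_left_mono) auto
      finally show ?case by simp
    qed
  qed
  have int2: "integrable M (\<lambda>x. c * exp (- ((fst x)^2) / ss))"
  proof (rule integrable_mult_right, rule PM.integrable_const_bound[OF _ em])
    show "AE x in M. norm (exp (- ((fst x)^2) / ss)) \<le> 1" using ss_pos by simp
  qed
  have "c * (\<integral>x. exp (- ((fst x)^2) / ss) \<partial>M) = (\<integral>x. c * exp (- ((fst x)^2) / ss) \<partial>M)" by simp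
  also have "\<dots> \<le> p_out \<gamma> \<sigma> L M r \<phi>"
    unfolding p_out_def
  proof (rule integral_mono_AE[OF int2 int1])
    show "AE x in M. c * exp (- ((fst x)^2) / ss) \<le> pcond \<gamma> \<sigma> L r \<phi> (fst x) (snd x)"
      using AE0
    proof eventually_elim
      case (elim x)
      have "c * exp (- ((fst x)^2) / ss) = (2 * r / ss * exp (- (r^2) / ss) * exp (- ((fst x)^2) / ss)) / (2 * pi) * (1 - xi \<gamma> \<sigma> L r)"
        unfolding c_def by (simp add: mult_ac)
      also have "\<dots> \<le> pRR0 \<sigma> L r (fst x) / (2 * pi) * (1 - xi \<gamma> \<sigma> L r)"
        using pRR0_lower[OF r, of "fst x"] xr by (intro mult_right_mono divide_right_mono) auto
      also have "\<dots> \<le> pcond \<gamma> \<sigma> L r \<phi> (fst x) (snd x)" by (rule pcond_lower[OF r elim])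
      finally show ?case .
    qed
  qed
  moreover have "c * (\<integral>x. exp (- ((fst x)^2) / ss) \<partial>M) = (\<integral>x. exp (- ((fst x)^2) / ss) \<partial>M) * r / (pi * \<sigma>^2 * L) * exp (- (r^2) / (\<sigma>^2 * L)) * (1 - xi \<gamma> \<sigma> L r)"
    unfolding c_def ss_def by (simp add: mult_ac)
  ultimately show ?thesis unfolding k1 by simp
qed

lemma part3b:
  assumes P: "prob_space M" and S: "sets M = sets (borel :: (real \<times> real) measure)"
    and AE0: "AE x in M. fst x \<ge> 0" and r: "r \<ge> 0"
  shows "p_amp \<sigma> L M r \<ge> 2 * (\<integral>r0. exp (- (r0^2) / (\<sigma>^2 * L)) \<partial>(distr M lborel fst)) * r / (\<sigma>^2 * L) * exp (- (r^2) / (\<sigma>^2 * L))"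
proof -
  have fm: "fst \<in> measurable M lborel" by (rule fst_meas[OF S])
  interpret PF: prob_space "distr M lborel fst" using prob_space.prob_space_distr[OF P fm] .
  have AEF: "AE r0 in distr M lborel fst. r0 \<ge> 0"
    using AE0 by (subst AE_distr_iff[OF fm]) auto
  define c where "c = 2 * r / ss * exp (- (r^2) / ss)"
  have int1: "integrable (distr M lborel fst) (pRR0 \<sigma> L r)"
  proof (rule PF.integrable_const_bound)
    show "pRR0 \<sigma> L r \<in> borel_measurable (distr M lborel fst)" by measurable
    show "AE x in distr M lborel fst. norm (pRR0 \<sigma> L r x) \<le> 2 * r / ss"
      using AEF
    proof eventually_elim
      case (elim r0)
      have "\<bar>pRR0 \<sigma> L r r0\<bar> = pRR0 \<sigma> L r r0" using pRR0_nonneg[OF r elim] by simp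
      also have "\<dots> \<le> 2 * r / ss * exp (- ((r - r0)^2) / ss)" by (rule pRR0_upper[OF r elim])
      also have "\<dots> \<le> 2 * r / ss * 1" using r ss_pos by (intro mult_left_mono) auto
      finally show ?case by simp
    qed
  qed
  have int2: "integrable (distr M lborel fst) (\<lambda>r0. c * exp (- (r0^2) / ss))"
  proof (rule integrable_mult_right, rule PF.integrable_const_bound)
    show "(\<lambda>r0. exp (- (r0^2) / ss)) \<in> borel_measurable (distr M lborel fst)" by measurable
    show "AE x in distr M lborel fst. norm (exp (- (x^2) / ss)) \<le> 1" using ss_pos by simp
  qed
  have "c * (\<integral>r0. exp (- (r0^2) / ss) \<partial>(distr M lborel fst)) = (\<integral>r0. c * exp (- (r0^2) / ss) \<partial>(distr M lborel fst))" by simp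
  also have "\<dots> \<le> p_amp \<sigma> L M r"
    unfolding p_amp_def
    by (rule integral_mono[OF int2 int1]) (use pRR0_lower[OF r] in \<open>simp add: c_def\<close>)
  moreover have "c * (\<integral>r0. exp (- (r0^2) / ss) \<partial>(distr M lborel fst)) = 2 * (\<integral>r0. exp (- (r0^2) / (\<sigma>^2 * L)) \<partial>(distr M lborel fst)) * r / (\<sigma>^2 * L) * exp (- (r^2) / (\<sigma>^2 * L))"
    unfolding c_def ss_def by (simp add: mult_ac)
  ultimately show ?thesis by simp
qed

end



theorem mainTheorem8:
  fixes \<gamma> \<sigma> L :: real and M :: "(real \<times> real) measure"
  assumes "\<gamma> > 0" "\<sigma> > 0" "L > 0"
    and "prob_space M" and "sets M = sets borel"
    and "AE x in M. fst x \<ge> 0"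
  shows
    "(\<forall>\<rho>>0. in_P \<rho> (distr M lborel fst) \<longrightarrow>
        (\<forall>r\<ge>0. \<forall>\<phi>. p_out \<gamma> \<sigma> L M r \<phi>
            \<le> 2 * k_u \<gamma> \<sigma> L * r / (\<sigma>^2 * L) * exp (- (r^2 - 2 * r * \<rho>) / (\<sigma>^2 * L))))
   \<and> (\<forall>(A::real) (C::real\<Rightarrow>real). A > 0 \<and> in_A C A (distr M lborel fst) \<longrightarrow>
        (\<forall>r>0. C (r / 2) > 0 \<longrightarrow> (\<forall>\<phi>. p_out \<gamma> \<sigma> L M r \<phi>
            \<le> 2 * k_u \<gamma> \<sigma> L * r / (\<sigma>^2 * L)
               * (exp (- (r^2) / (4 * \<sigma>^2 * L)) + A / C (r / 2)))))
   \<and> (\<forall>\<rho> (A::real) (C::real\<Rightarrow>real). (\<rho> > 0 \<and> in_P \<rho> (distr M lborel fst))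
              \<or> (A > 0 \<and> in_A C A (distr M lborel fst))
              \<or> (\<rho> > 0 \<and> A > 0 \<and> in_P \<rho> (distr M lborel fst) \<and> in_A' C A (distr M lborel fst)) \<longrightarrow>
        (let k1 = (\<integral>r0. exp (- (r0^2) / (\<sigma>^2 * L)) \<partial>(distr M lborel fst)) in
          (\<forall>\<^sub>F r in at_top. \<forall>\<phi>. p_out \<gamma> \<sigma> L M r \<phi>
              \<ge> k1 * r / (pi * \<sigma>^2 * L) * exp (- (r^2) / (\<sigma>^2 * L)) * (1 - xi \<gamma> \<sigma> L r))
          \<and> (\<forall>r\<ge>0. p_amp \<sigma> L M r \<ge> 2 * k1 * r / (\<sigma>^2 * L) * exp (- (r^2) / (\<sigma>^2 * L)))))"
proof -
  interpret chan \<gamma> \<sigma> L by unfold_locales (use assms in auto)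
  have P: "prob_space M" and S: "sets M = sets (borel :: (real \<times> real) measure)"
    and AE0: "AE x in M. fst x \<ge> 0" using assms by auto
  have P1: "\<forall>\<rho>>0. in_P \<rho> (distr M lborel fst) \<longrightarrow>
        (\<forall>r\<ge>0. \<forall>\<phi>. p_out \<gamma> \<sigma> L M r \<phi>
            \<le> 2 * k_u \<gamma> \<sigma> L * r / (\<sigma>^2 * L) * exp (- (r^2 - 2 * r * \<rho>) / (\<sigma>^2 * L)))"
    using part1[OF P S] by blast
  have P2: "\<forall>(A::real) (C::real\<Rightarrow>real). A > 0 \<and> in_A C A (distr M lborel fst) \<longrightarrow>
        (\<forall>r>0. C (r / 2) > 0 \<longrightarrow> (\<forall>\<phi>. p_out \<gamma> \<sigma> L M r \<phi>
            \<le> 2 * k_u \<gamma> \<sigma> L * r / (\<sigma>^2 * L)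
               * (exp (- (r^2) / (4 * \<sigma>^2 * L)) + A / C (r / 2))))"
    using part2[OF P S AE0] by blast
  have P3: "(let k1 = (\<integral>r0. exp (- (r0^2) / (\<sigma>^2 * L)) \<partial>(distr M lborel fst)) in
          (\<forall>\<^sub>F r in at_top. \<forall>\<phi>. p_out \<gamma> \<sigma> L M r \<phi>
              \<ge> k1 * r / (pi * \<sigma>^2 * L) * exp (- (r^2) / (\<sigma>^2 * L)) * (1 - xi \<gamma> \<sigma> L r))
          \<and> (\<forall>r\<ge>0. p_amp \<sigma> L M r \<ge> 2 * k1 * r / (\<sigma>^2 * L) * exp (- (r^2) / (\<sigma>^2 * L))))"
    unfolding Let_def
  proof (intro conjI allI impI)
    show "\<forall>\<^sub>F r in at_top. \<forall>\<phi>. p_out \<gamma> \<sigma> L M r \<phi>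
              \<ge> (\<integral>r0. exp (- (r0^2) / (\<sigma>^2 * L)) \<partial>(distr M lborel fst)) * r / (pi * \<sigma>^2 * L) * exp (- (r^2) / (\<sigma>^2 * L)) * (1 - xi \<gamma> \<sigma> L r)"
      using xi_eventually by eventually_elim (use part3a[OF P S AE0] in blast)
    fix r :: real assume "r \<ge> 0"
    then show "p_amp \<sigma> L M r \<ge> 2 * (\<integral>r0. exp (- (r0^2) / (\<sigma>^2 * L)) \<partial>(distr M lborel fst)) * r / (\<sigma>^2 * L) * exp (- (r^2) / (\<sigma>^2 * L))"
      by (rule part3b[OF P S AE0])
  qed
  show ?thesis using P1 P2 P3 by blast
qed

end
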